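(* Let $\mathcal{S}$ be finite, $\Pi$ irreducible stochastic on $\mathcal{S}$, $\kappa(x,y):=\pi_{xy}-\mathbf{1}_{x=y}$, $\mathcal{K}=\Pi-\mathrm{I}$, $Q=(q(y))$ the invariant distribution, and assume detailed balance $q(y)\kappa(y,z)=q(z)\kappa(z,y)$ for all $y,z$. Let $\Phi:(0,\infty)\to\mathbb{R}$ be convex, continuously differentiable with continuous strictly positive second derivative, $\Phi(1)=0$, $\varphi:=\Phi'$. Let $P\in\mathcal{M}$ with likelihood ratio vector $\boldsymbol{\ell}=P/Q$. Then along any smooth curve $(\widetilde P_t)_{0\le t<\infty}\subset\mathcal{M}$ with $\widetilde P_0=P$ and induced likelihood ratios $\widetilde\ell_t=\widetilde P_t/Q$, $$\Big(2\,\partial_tH^\Phi(\widetilde P_t\,|\,Q)+\big\|\partial_t\widetilde\ell_t\big\|^2_{\mathbb{H}^{-1}_\Theta(\mathcal{S},\boldsymbol{\ell}Q)}\Big)\Big|_{t=0}\ \ge\ -\big\|\varphi(\boldsymbol{\ell})\big\|^2_{\mathbb{H}^1_\Theta(\mathcal{S},\boldsymbol{\ell}Q)} .$$ Equality holds if and only if the curve satisfies the forward equation $\partial_t\widetilde P_t=\mathcal{K}'\widetilde P_t$ (equivalently, $\partial_t\widetilde\ell_t=\mathcal{K}\widetilde\ell_t$, with driver $f_t=-\varphi(\widetilde\ell_t)$ in the continuity equation $\partial_t\widetilde\ell_t+\nabla\cdot(\vartheta_{\widetilde\ell_t}\nabla f_t)=0$).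
   Context: $\mathcal{M}$: probability vectors on $\mathcal{S}$ with strictly positive entries; $\mathcal{K}'$ is the transpose of $\mathcal{K}$. $H^\Phi(P\,|\,Q):=\sum_yq(y)\Phi(p(y)/q(y))$. $\mathcal{Z}:=\{(x,y):\kappa(x,y)>0\}$, $c(x,y):=\frac12\kappa(x,y)q(x)$, $\nabla f(x,y):=f(y)-f(x)$, $(\nabla\cdot F)(x):=\frac12\sum_{y\ne x}\kappa(x,y)[F(x,y)-F(y,x)]$; $\Theta^\Phi(a,b):=\frac{a-b}{\varphi(a)-\varphi(b)}$ for $a\ne b$, $\Theta^\Phi(b,b):=1/\Phi''(b)$; $\vartheta_\ell(x,y):=\Theta^\Phi(\ell(x),\ell(y))$; $\|f\|^2_{\mathbb{H}^1_\Theta(\mathcal{S},\ell Q)}:=\sum_{(x,y)\in\mathcal{Z}}c(x,y)\vartheta_\ell(x,y)(\nabla f(x,y))^2$; $\|f\|_{\mathbb{H}^{-1}_\Theta(\mathcal{S},\ell Q)}:=\sup_{g}\frac{\sum_xq(x)f(x)g(x)}{\|g\|_{\mathbb{H}^1_\Theta(\mathcal{S},\ell Q)}}$. *)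

theory Defs
  imports "HOL-Analysis.Analysis"
begin

definition kappa :: "('a \<Rightarrow> 'a \<Rightarrow> real) \<Rightarrow> 'a \<Rightarrow> 'a \<Rightarrow> real" where
  "kappa Pm x y = Pm x y - (if x = y then 1 else 0)"

definition stochastic :: "('a::finite \<Rightarrow> 'a \<Rightarrow> real) \<Rightarrow> bool" where
  "stochastic Pm \<longleftrightarrow> (\<forall>x y. Pm x y \<ge> 0) \<and> (\<forall>x. (\<Sum>y\<in>UNIV. Pm x y) = 1)"

definition irreducible_chain :: "('a \<Rightarrow> 'a \<Rightarrow> real) \<Rightarrow> bool" where
  "irreducible_chain Pm \<longleftrightarrow> (\<forall>x y. (x, y) \<in> {(u, v). Pm u v > 0}\<^sup>+)"

definition invariant_distribution :: "('a::finite \<Rightarrow> 'a \<Rightarrow> real) \<Rightarrow> ('a \<Rightarrow> real) \<Rightarrow> bool" where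
  "invariant_distribution Pm q \<longleftrightarrow> (\<forall>y. q y \<ge> 0) \<and> (\<Sum>y\<in>UNIV. q y) = 1
      \<and> (\<forall>y. (\<Sum>x\<in>UNIV. q x * Pm x y) = q y)"

definition probM :: "('a::finite \<Rightarrow> real) set" where
  "probM = {p. (\<forall>y. p y > 0) \<and> (\<Sum>y\<in>UNIV. p y) = 1}"

definition Hphi :: "(real \<Rightarrow> real) \<Rightarrow> ('a::finite \<Rightarrow> real) \<Rightarrow> ('a \<Rightarrow> real) \<Rightarrow> real" where
  "Hphi Phi p q = (\<Sum>y\<in>UNIV. q y * Phi (p y / q y))"

text \<open>Theta^Phi(a,b); phi = Phi', phi2 = Phi''.\<close>
definition Theta :: "(real \<Rightarrow> real) \<Rightarrow> (real \<Rightarrow> real) \<Rightarrow> real \<Rightarrow> real \<Rightarrow> real" where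
  "Theta phi phi2 a b = (if a = b then 1 / phi2 b else (a - b) / (phi a - phi b))"

definition H1sq :: "('a::finite \<Rightarrow> 'a \<Rightarrow> real) \<Rightarrow> ('a \<Rightarrow> real) \<Rightarrow> (real \<Rightarrow> real) \<Rightarrow> (real \<Rightarrow> real)
     \<Rightarrow> ('a \<Rightarrow> real) \<Rightarrow> ('a \<Rightarrow> real) \<Rightarrow> real" where
  "H1sq Pm q phi phi2 l f =
     (\<Sum>(x, y)\<in>{(x, y). kappa Pm x y > 0}.
        (1/2) * kappa Pm x y * q x * Theta phi phi2 (l x) (l y) * (f y - f x)^2)"

definition H1norm where
  "H1norm Pm q phi phi2 l f = sqrt (H1sq Pm q phi phi2 l f)"

text \<open>H^{-1}_Theta(S, l Q) norm as the supremum of the dual pairing over all g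
  (in Isabelle x/0 = 0, so g with vanishing H^1 seminorm contribute 0).\<close>
definition Hm1norm :: "('a::finite \<Rightarrow> 'a \<Rightarrow> real) \<Rightarrow> ('a \<Rightarrow> real) \<Rightarrow> (real \<Rightarrow> real) \<Rightarrow> (real \<Rightarrow> real)
     \<Rightarrow> ('a \<Rightarrow> real) \<Rightarrow> ('a \<Rightarrow> real) \<Rightarrow> real" where
  "Hm1norm Pm q phi phi2 l f =
     Sup {(\<Sum>x\<in>UNIV. q x * f x * g x) / H1norm Pm q phi phi2 l g | g. True}"

end

theory Submission
  imports Defs
begin


lemma kappa_row_sum:
  assumes "stochastic Pm"
  shows "(\<Sum>y\<in>UNIV. kappa Pm x y) = 0"
  using assms by (simp add: kappa_def stochastic_def sum_subtractf)

lemma kappa_offdiag_nonneg: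
  assumes "stochastic Pm" "x \<noteq> y"
  shows "kappa Pm x y \<ge> 0"
  using assms by (simp add: kappa_def stochastic_def)

lemma B_identity:
  fixes Pm :: "'a::finite \<Rightarrow> 'a \<Rightarrow> real"
  assumes stoch: "stochastic Pm"
    and db: "\<And>y z. q y * kappa Pm y z = q z * kappa Pm z y"
    and thg: "\<And>x y. Th x y * (g y - g x) = l y - l x"
  shows "(\<Sum>(x,y)\<in>{(x,y). kappa Pm x y > 0}. 1/2 * kappa Pm x y * q x * Th x y * (g y - g x) * (h y - h x))
     = - (\<Sum>y\<in>UNIV. (\<Sum>x\<in>UNIV. kappa Pm x y * (q x * l x)) * h y)"
proof -
  let ?t = "\<lambda>x y. 1/2 * kappa Pm x y * q x * (l y - l x) * (h y - h x)"
  have "(\<Sum>(x,y)\<in>{(x,y). kappa Pm x y > 0}. 1/2 * kappa Pm x y * q x * Th x y * (g y - g x) * (h y - h x))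
     = (\<Sum>(x,y)\<in>{(x,y). kappa Pm x y > 0}. ?t x y)"
    apply (rule sum.cong, simp)
    using thg by (auto simp: mult.assoc)
  also have "\<dots> = (\<Sum>(x,y)\<in>UNIV. ?t x y)"
  proof (rule sum.mono_neutral_left)
    show "\<forall>i\<in>UNIV - {(x, y). 0 < kappa Pm x y}. (case i of (x, y) \<Rightarrow> ?t x y) = 0"
    proof
      fix i assume "i \<in> UNIV - {(x, y). 0 < kappa Pm x y}"
      then obtain x y where i: "i = (x,y)" and k: "\<not> kappa Pm x y > 0" by auto
      show "(case i of (x, y) \<Rightarrow> ?t x y) = 0"
      proof (cases "x = y")
        case True thus ?thesis using i by simp
      next
        case False
        then have "kappa Pm x y = 0" using k kappa_offdiag_nonneg[OF stoch False] by linarith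
        thus ?thesis using i by simp
      qed
    qed
  qed auto
  also have "\<dots> = (\<Sum>x\<in>UNIV. \<Sum>y\<in>UNIV. ?t x y)"
    by (simp add: sum.cartesian_product[symmetric] UNIV_Times_UNIV[symmetric] del: UNIV_Times_UNIV)
  also have "\<dots> = 1/2 * ((\<Sum>x\<in>UNIV. \<Sum>y\<in>UNIV. q x * kappa Pm x y * l y * h y)
       - (\<Sum>x\<in>UNIV. \<Sum>y\<in>UNIV. q x * kappa Pm x y * l y * h x)
       - (\<Sum>x\<in>UNIV. \<Sum>y\<in>UNIV. q x * kappa Pm x y * l x * h y)
       + (\<Sum>x\<in>UNIV. \<Sum>y\<in>UNIV. q x * kappa Pm x y * l x * h x))"
  proof -
    have e: "\<And>x y. ?t x y = 1/2 * (q x * kappa Pm x y * l y * h y - q x * kappa Pm x y * l y * h x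
       - q x * kappa Pm x y * l x * h y + q x * kappa Pm x y * l x * h x)"
      by (simp add: field_simps)
    show ?thesis unfolding e
      by (simp only: sum_distrib_left[symmetric] sum.distrib sum_subtractf)
  qed
  also have "(\<Sum>x\<in>UNIV. \<Sum>y\<in>UNIV. q x * kappa Pm x y * l y * h y) = 0"
  proof -
    have "(\<Sum>x\<in>UNIV. \<Sum>y\<in>UNIV. q x * kappa Pm x y * l y * h y)
        = (\<Sum>x\<in>UNIV. \<Sum>y\<in>UNIV. q y * kappa Pm y x * l y * h y)"
      using db by simp
    also have "\<dots> = (\<Sum>y\<in>UNIV. l y * h y * q y * (\<Sum>x\<in>UNIV. kappa Pm y x))"
      by (subst sum.swap) (simp add: sum_distrib_left algebra_simps)
    also have "\<dots> = 0" by (simp add: kappa_row_sum[OF stoch])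
    finally show ?thesis .
  qed
  also have "(\<Sum>x\<in>UNIV. \<Sum>y\<in>UNIV. q x * kappa Pm x y * l x * h x) = 0"
  proof -
    have "(\<Sum>x\<in>UNIV. \<Sum>y\<in>UNIV. q x * kappa Pm x y * l x * h x)
        = (\<Sum>x\<in>UNIV. q x * l x * h x * (\<Sum>y\<in>UNIV. kappa Pm x y))"
      by (simp add: sum_distrib_left algebra_simps)
    also have "\<dots> = 0" by (simp add: kappa_row_sum[OF stoch])
    finally show ?thesis .
  qed
  also have "(\<Sum>x\<in>UNIV. \<Sum>y\<in>UNIV. q x * kappa Pm x y * l y * h x)
      = (\<Sum>y\<in>UNIV. (\<Sum>x\<in>UNIV. kappa Pm x y * (q x * l x)) * h y)"
  proof -
    have "(\<Sum>x\<in>UNIV. \<Sum>y\<in>UNIV. q x * kappa Pm x y * l y * h x)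
        = (\<Sum>x\<in>UNIV. \<Sum>y\<in>UNIV. q y * kappa Pm y x * l y * h x)"
      using db by simp
    also have "\<dots> = (\<Sum>x\<in>UNIV. (\<Sum>y\<in>UNIV. kappa Pm y x * (q y * l y)) * h x)"
      by (simp add: sum_distrib_right sum_distrib_left algebra_simps)
    finally show ?thesis .
  qed
  also have "(\<Sum>x\<in>UNIV. \<Sum>y\<in>UNIV. q x * kappa Pm x y * l x * h y)
      = (\<Sum>y\<in>UNIV. (\<Sum>x\<in>UNIV. kappa Pm x y * (q x * l x)) * h y)"
    by (subst sum.swap) (simp add: sum_distrib_right sum_distrib_left algebra_simps)
  finally show ?thesis by simp
qed



lemma sup_facts:
  fixes A Qf :: "('a \<Rightarrow> real) \<Rightarrow> real"
  assumes bound: "\<And>h. A h \<le> C * sqrt (Qf h)" and Qnn: "\<And>h. Qf h \<ge> 0"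
    and A0: "A (\<lambda>x. 0) = 0"
  defines "N \<equiv> Sup {A h / sqrt (Qf h) | h. True}"
  shows sup_upper: "\<And>h. A h / sqrt (Qf h) \<le> N"
    and sup_nonneg: "0 \<le> N"
    and sup_quad: "\<And>h. 2 * A h - Qf h \<le> N^2"
    and sup_least: "\<And>M. (\<And>h. A h \<le> M * sqrt (Qf h)) \<Longrightarrow> 0 \<le> M \<Longrightarrow> N \<le> M"
proof -
  let ?S = "{A h / sqrt (Qf h) | h. True}"
  have le: "A h / sqrt (Qf h) \<le> max C 0" for h
  proof (cases "Qf h = 0")
    case True thus ?thesis by simp
  next
    case False
    then have s: "sqrt (Qf h) > 0" using Qnn[of h] by simp
    have "C * sqrt (Qf h) \<le> max C 0 * sqrt (Qf h)" using s by (intro mult_right_mono) auto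
    then have "A h \<le> max C 0 * sqrt (Qf h)" using bound[of h] by linarith
    thus ?thesis using s by (simp add: divide_le_eq)

  qed
  have bdd: "bdd_above ?S" by (rule bdd_aboveI[where M="max C 0"]) (auto intro: le)
  show up: "A h / sqrt (Qf h) \<le> N" for h unfolding N_def by (rule cSup_upper) (use bdd in auto)
  show nn: "0 \<le> N" using up[of "\<lambda>x. 0"] A0 by simp
  show "2 * A h - Qf h \<le> N^2" for h
  proof (cases "Qf h = 0")
    case True
    then have "A h \<le> 0" using bound[of h] by simp
    moreover have "0 \<le> N^2" by simp
    ultimately show ?thesis using True by linarith
  next
    case False
    then have s: "sqrt (Qf h) > 0" using Qnn[of h] by simp
    then have "A h \<le> N * sqrt (Qf h)" using up[of h] by (simp add: divide_le_eq)
    moreover have "Qf h = (sqrt (Qf h))^2" using Qnn[of h] by simp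
    moreover have "2 * N * sqrt (Qf h) - (sqrt (Qf h))^2 \<le> N^2"
      using zero_le_power2[of "N - sqrt (Qf h)"] by (simp add: power2_diff)
    ultimately show ?thesis by linarith
  qed
  show "N \<le> M" if hM: "\<And>h. A h \<le> M * sqrt (Qf h)" and M0: "0 \<le> M" for M
    unfolding N_def
  proof (rule cSup_least)
    show "?S \<noteq> {}" by auto
    fix x assume "x \<in> ?S"
    then obtain h where x: "x = A h / sqrt (Qf h)" by auto
    show "x \<le> M"
    proof (cases "Qf h = 0")
      case True thus ?thesis using x M0 by simp
    next
      case False
      then have "sqrt (Qf h) > 0" using Qnn[of h] by simp
      thus ?thesis using hM[of h] x by (simp add: divide_le_eq mult.commute)
    qed
  qed
qed

lemma poincare_path:
  fixes Qf :: "('a \<Rightarrow> real) \<Rightarrow> real"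
  assumes Qnn: "\<And>h. Qf h \<ge> 0"
    and edge: "\<And>x y. Pm x y > 0 \<Longrightarrow> x \<noteq> y \<Longrightarrow> \<exists>c>0. \<forall>h. c * (h y - h x)^2 \<le> Qf h"
    and path: "(x, y) \<in> {(u, v). Pm u v > (0::real)}\<^sup>+"
  shows "\<exists>C. \<forall>h. \<bar>h y - h x\<bar> \<le> C * sqrt (Qf h)"
  using path
proof (induction rule: trancl_induct)
  case (base y)
  show ?case
  proof (cases "x = y")
    case True thus ?thesis by (intro exI[of _ 0]) simp
  next
    case False
    from base have "Pm x y > 0" by simp
    from edge[OF this False] obtain c where c: "c > 0" "\<And>h. c * (h y - h x)^2 \<le> Qf h" by blast
    have "\<bar>h y - h x\<bar> \<le> (1 / sqrt c) * sqrt (Qf h)" for h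
    proof -
      have "(h y - h x)^2 \<le> Qf h / c" using c by (simp add: le_divide_eq mult.commute)
      then have "sqrt ((h y - h x)^2) \<le> sqrt (Qf h / c)" by (rule real_sqrt_le_mono)
      thus ?thesis by (simp add: real_sqrt_divide)
    qed
    thus ?thesis by blast
  qed
next
  case (step y z)
  from step.IH obtain C1 where C1: "\<And>h. \<bar>h y - h x\<bar> \<le> C1 * sqrt (Qf h)" by blast
  have "\<exists>C. \<forall>h. \<bar>h z - h y\<bar> \<le> C * sqrt (Qf h)"
  proof (cases "y = z")
    case True thus ?thesis by (intro exI[of _ 0]) simp
  next
    case False
    from step have "Pm y z > 0" by simp
    from edge[OF this False] obtain c where c: "c > 0" "\<And>h. c * (h z - h y)^2 \<le> Qf h" by blast
    have "\<bar>h z - h y\<bar> \<le> (1 / sqrt c) * sqrt (Qf h)" for h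
    proof -
      have "(h z - h y)^2 \<le> Qf h / c" using c by (simp add: le_divide_eq mult.commute)
      then have "sqrt ((h z - h y)^2) \<le> sqrt (Qf h / c)" by (rule real_sqrt_le_mono)
      thus ?thesis by (simp add: real_sqrt_divide)
    qed
    thus ?thesis by blast
  qed
  then obtain C2 where C2: "\<And>h. \<bar>h z - h y\<bar> \<le> C2 * sqrt (Qf h)" by blast
  have "\<bar>h z - h x\<bar> \<le> (C1 + C2) * sqrt (Qf h)" for h
    using C1[of h] C2[of h] by (simp add: distrib_right)
  thus ?case by blast
qed



lemma cs_w:
  fixes w a b :: "'b \<Rightarrow> real"
  assumes "\<And>i. i \<in> I \<Longrightarrow> w i \<ge> 0"
  shows "(\<Sum>i\<in>I. w i * a i * b i)^2 \<le> (\<Sum>i\<in>I. w i * (a i)^2) * (\<Sum>i\<in>I. w i * (b i)^2)"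
proof -
  have "(\<Sum>i\<in>I. (sqrt (w i) * a i) * (sqrt (w i) * b i))^2
     \<le> (\<Sum>i\<in>I. (sqrt (w i) * a i)^2) * (\<Sum>i\<in>I. (sqrt (w i) * b i)^2)"
    by (rule Cauchy_Schwarz_ineq_sum)
  moreover have "(\<Sum>i\<in>I. (sqrt (w i) * a i) * (sqrt (w i) * b i)) = (\<Sum>i\<in>I. w i * a i * b i)"
    by (rule sum.cong) (use assms in \<open>auto simp: algebra_simps real_sqrt_mult[symmetric]\<close>)
  moreover have "(\<Sum>i\<in>I. (sqrt (w i) * a i)^2) = (\<Sum>i\<in>I. w i * (a i)^2)"
    by (rule sum.cong) (use assms in \<open>auto simp: power_mult_distrib\<close>)
  moreover have "(\<Sum>i\<in>I. (sqrt (w i) * b i)^2) = (\<Sum>i\<in>I. w i * (b i)^2)"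
    by (rule sum.cong) (use assms in \<open>auto simp: power_mult_distrib\<close>)
  ultimately show ?thesis by simp
qed

lemma quad_expand:
  fixes W :: "'a \<Rightarrow> 'a \<Rightarrow> real"
  shows "(\<Sum>(x,y)\<in>E. W x y * ((a * h y + b * k y) - (a * h x + b * k x)) * ((a * h y + b * k y) - (a * h x + b * k x)))
   = a^2 * (\<Sum>(x,y)\<in>E. W x y * (h y - h x) * (h y - h x))
     + 2 * a * b * (\<Sum>(x,y)\<in>E. W x y * (h y - h x) * (k y - k x))
     + b^2 * (\<Sum>(x,y)\<in>E. W x y * (k y - k x) * (k y - k x))"
proof -
  have e: "\<And>x y. W x y * ((a * h y + b * k y) - (a * h x + b * k x)) * ((a * h y + b * k y) - (a * h x + b * k x))
     = a^2 * (W x y * (h y - h x) * (h y - h x)) + 2 * a * b * (W x y * (h y - h x) * (k y - k x))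
       + b^2 * (W x y * (k y - k x) * (k y - k x))"
    by (simp add: algebra_simps power2_eq_square)
  show ?thesis
    unfolding e by (simp add: sum.distrib sum_distrib_left split_def)
qed

lemma q_pos:
  fixes Pm :: "'a::finite \<Rightarrow> 'a \<Rightarrow> real"
  assumes stoch: "stochastic Pm" and irred: "irreducible_chain Pm"
    and inv: "invariant_distribution Pm q"
  shows "q x > 0"
proof -
  have step1: "q u = 0" if "Pm u v > 0" "q v = 0" for u v
  proof -
    have nn: "\<forall>w\<in>UNIV. 0 \<le> q w * Pm w v" using stoch inv by (auto simp: stochastic_def invariant_distribution_def)
    have "(\<Sum>w\<in>UNIV. q w * Pm w v) = 0" using inv that(2) by (simp add: invariant_distribution_def)
    then have "q u * Pm u v = 0" using sum_nonneg_eq_0_iff[of UNIV "\<lambda>w. q w * Pm w v"] nn by simp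
    thus ?thesis using that(1) by simp
  qed
  have path: "(u, v) \<in> {(u, v). Pm u v > 0}\<^sup>+ \<Longrightarrow> q v = 0 \<longrightarrow> q u = 0" for u v
  proof (induction rule: trancl_induct)
    case (base y) thus ?case using step1 by auto
  next
    case (step y z) thus ?case using step1 by auto
  qed
  show ?thesis
  proof (rule ccontr)
    assume "\<not> q x > 0"
    then have "q x = 0" using inv by (auto simp: invariant_distribution_def intro: antisym)
    then have "q u = 0" for u using path[of u x] irred by (auto simp: irreducible_chain_def)
    thus False using inv by (simp add: invariant_distribution_def)
  qed
qed

lemma phi_strict:
  fixes phi phi2 :: "real \<Rightarrow> real"
  assumes phi_deriv: "\<And>x. x > 0 \<Longrightarrow> (phi has_real_derivative phi2 x) (at x)"
    and phi2_pos: "\<And>x. x > 0 \<Longrightarrow> phi2 x > 0"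
    and "0 < a" "a < b"
  shows "phi a < phi b"
  using assms(4)
proof (rule DERIV_pos_imp_increasing)
  fix x assume "a \<le> x" "x \<le> b"
  then have "x > 0" using assms by simp
  thus "\<exists>y. DERIV phi x :> y \<and> y > 0" using phi_deriv phi2_pos by blast
qed

lemma theta_props:
  fixes phi phi2 :: "real \<Rightarrow> real"
  assumes phi_deriv: "\<And>x. x > 0 \<Longrightarrow> (phi has_real_derivative phi2 x) (at x)"
    and phi2_pos: "\<And>x. x > 0 \<Longrightarrow> phi2 x > 0"
    and "0 < a" "0 < b"
  shows "Theta phi phi2 a b > 0" and "Theta phi phi2 a b * (phi b - phi a) = b - a"
proof -
  have "Theta phi phi2 a b > 0 \<and> Theta phi phi2 a b * (phi b - phi a) = b - a"
  proof (cases "a = b")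
    case True thus ?thesis using phi2_pos assms by (simp add: Theta_def)
  next
    case False
    show ?thesis
    proof (cases "a < b")
      case True
      then have "phi a < phi b" using phi_strict[OF phi_deriv phi2_pos] assms by blast
      thus ?thesis using True False by (auto simp: Theta_def field_simps intro: divide_pos_pos)
    next
      case False2: False
      then have "b < a" using False by simp
      then have "phi b < phi a" using phi_strict[OF phi_deriv phi2_pos] assms by blast
      thus ?thesis using \<open>b < a\<close> False by (auto simp: Theta_def field_simps)
    qed
  qed
  thus "Theta phi phi2 a b > 0" and "Theta phi phi2 a b * (phi b - phi a) = b - a" by auto
qed



theorem theorem9p2:
  fixes Pm :: "'a::finite \<Rightarrow> 'a \<Rightarrow> real"
    and q :: "'a \<Rightarrow> real"
    and Phi phi phi2 :: "real \<Rightarrow> real"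
    and p :: "'a \<Rightarrow> real"
    and Pt dPt :: "real \<Rightarrow> 'a \<Rightarrow> real"
    and dH :: real
  assumes stoch: "stochastic Pm"
    and irred: "irreducible_chain Pm"
    and inv: "invariant_distribution Pm q"
    and db: "\<And>y z. q y * kappa Pm y z = q z * kappa Pm z y"
    and Phi_convex: "convex_on {0<..} Phi"
    and Phi_deriv: "\<And>x. x > 0 \<Longrightarrow> (Phi has_real_derivative phi x) (at x)"
    and phi_deriv: "\<And>x. x > 0 \<Longrightarrow> (phi has_real_derivative phi2 x) (at x)"
    and phi_cont: "continuous_on {0<..} phi"
    and phi2_cont: "continuous_on {0<..} phi2"
    and phi2_pos: "\<And>x. x > 0 \<Longrightarrow> phi2 x > 0"
    and Phi1: "Phi 1 = 0"
    and pM: "p \<in> probM"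
    and curveM: "\<And>t. t \<ge> 0 \<Longrightarrow> Pt t \<in> probM"
    and curve0: "Pt 0 = p"
    and curve_deriv: "\<And>t x. t \<ge> 0 \<Longrightarrow>
        ((\<lambda>s. Pt s x) has_real_derivative dPt t x) (at t within {0..})"
    and H_deriv: "((\<lambda>t. Hphi Phi (Pt t) q) has_real_derivative dH) (at 0 within {0..})"
  shows "(2 * dH + (Hm1norm Pm q phi phi2 (\<lambda>x. p x / q x) (\<lambda>x. dPt 0 x / q x))^2
           \<ge> - H1sq Pm q phi phi2 (\<lambda>x. p x / q x) (\<lambda>x. phi (p x / q x)))
       \<and> (2 * dH + (Hm1norm Pm q phi phi2 (\<lambda>x. p x / q x) (\<lambda>x. dPt 0 x / q x))^2
           = - H1sq Pm q phi phi2 (\<lambda>x. p x / q x) (\<lambda>x. phi (p x / q x))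
         \<longleftrightarrow> (\<forall>y. dPt 0 y = (\<Sum>x\<in>UNIV. kappa Pm x y * Pt 0 x)))"
proof -
  define l where "l = (\<lambda>x. p x / q x)"
  define g where "g = (\<lambda>x. phi (l x))"
  define dP where "dP = dPt 0"
  define W where "W = (\<lambda>x y. 1/2 * kappa Pm x y * q x * Theta phi phi2 (l x) (l y))"
  define E where "E = {(x,y). kappa Pm x y > 0}"
  define Bf where "Bf = (\<lambda>h k. \<Sum>(x,y)\<in>E. W x y * (h y - h x) * (k y - k x))"
  define A where "A = (\<lambda>h. \<Sum>x\<in>UNIV. q x * (dP x / q x) * h x)"
  define F where "F = (\<lambda>h. \<Sum>y\<in>UNIV. (\<Sum>x\<in>UNIV. kappa Pm x y * (q x * l x)) * h y)"
  define N where "N = Hm1norm Pm q phi phi2 (\<lambda>x. p x / q x) (\<lambda>x. dPt 0 x / q x)"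
  have qpos: "\<And>x. q x > 0" using q_pos[OF stoch irred inv] .
  have ppos: "\<And>x. p x > 0" using pM by (simp add: probM_def)
  have lpos: "\<And>x. l x > 0" using qpos ppos by (simp add: l_def)
  have Wpos: "W x y > 0" if "(x,y) \<in> E" for x y
    using that qpos[of x] theta_props(1)[OF phi_deriv phi2_pos lpos[of x] lpos[of y]]
    by (simp add: W_def E_def)
  have H1eq: "\<And>h. H1sq Pm q phi phi2 (\<lambda>x. p x / q x) h = Bf h h"
    unfolding H1sq_def Bf_def W_def E_def l_def by (simp add: power2_eq_square mult.assoc)
  have tnn: "\<And>x y h. (x,y) \<in> E \<Longrightarrow> 0 \<le> W x y * (h y - h x) * (h y - h x)"
    by (metis Wpos less_imp_le mult.assoc mult_nonneg_nonneg zero_le_square)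
  have Bnn: "\<And>h. Bf h h \<ge> 0"
    unfolding Bf_def by (rule sum_nonneg) (auto intro: tnn)
  have Aeq: "\<And>h. A h = (\<Sum>x\<in>UNIV. dP x * h x)"
    unfolding A_def using qpos by (simp add: less_imp_neq[symmetric])
  have Nsup: "N = Sup {A h / sqrt (Bf h h) | h. True}"
    unfolding N_def Hm1norm_def H1norm_def H1eq A_def dP_def by simp
  have Bg: "\<And>h. Bf g h = - F h"
  proof -
    fix h
    have thg: "\<And>x y. Theta phi phi2 (l x) (l y) * (g y - g x) = l y - l x"
      unfolding g_def using theta_props(2)[OF phi_deriv phi2_pos lpos lpos] by blast
    show "Bf g h = - F h"
      unfolding Bf_def W_def F_def E_def
      using B_identity[OF stoch db thg, where h=h] by (simp add: mult.assoc)
  qed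
  have Fp: "\<And>h. F h = (\<Sum>y\<in>UNIV. (\<Sum>x\<in>UNIV. kappa Pm x y * Pt 0 x) * h y)"
    unfolding F_def l_def curve0 using qpos by (simp add: less_imp_neq[symmetric])
  have quad: "\<And>a b h k. Bf (\<lambda>x. a * h x + b * k x) (\<lambda>x. a * h x + b * k x)
      = a^2 * Bf h h + 2 * a * b * Bf h k + b^2 * Bf k k"
    unfolding Bf_def by (rule quad_expand)
  have Bneg: "\<And>h. Bf (\<lambda>x. - h x) (\<lambda>x. - h x) = Bf h h"
    using quad[of "-1" _ 0] by simp
  have Aneg: "\<And>h. A (\<lambda>x. - h x) = - A h"
    unfolding Aeq by (simp add: sum_negf)
  have Alin: "\<And>a b h k. A (\<lambda>x. a * h x + b * k x) = a * A h + b * A k"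
    unfolding Aeq by (simp add: sum.distrib sum_distrib_left algebra_simps)
  have CS: "\<And>h k. (Bf h k)^2 \<le> Bf h h * Bf k k"
  proof -
    fix h k
    have "(\<Sum>i\<in>E. W (fst i) (snd i) * (h (snd i) - h (fst i)) * (k (snd i) - k (fst i)))^2
      \<le> (\<Sum>i\<in>E. W (fst i) (snd i) * (h (snd i) - h (fst i))^2) * (\<Sum>i\<in>E. W (fst i) (snd i) * (k (snd i) - k (fst i))^2)"
      by (rule cs_w) (use Wpos in \<open>force intro: less_imp_le\<close>)
    thus "(Bf h k)^2 \<le> Bf h h * Bf k k"
      unfolding Bf_def by (simp add: split_def power2_eq_square mult.assoc)
  qed
  have nb: "at (0::real) within {0..} \<noteq> bot"
  proof -
    have "{0::real..} - {0} = {0<..}" by auto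
    thus ?thesis by (simp add: at_within_eq_bot_iff)
  qed
  have sumdP: "(\<Sum>x\<in>UNIV. dP x) = 0"
  proof -
    have D1: "((\<lambda>s. \<Sum>x\<in>UNIV. Pt s x) has_real_derivative (\<Sum>x\<in>UNIV. dPt 0 x)) (at 0 within {0..})"
      by (rule DERIV_sum) (use curve_deriv in auto)
    have D2: "((\<lambda>s. \<Sum>x\<in>UNIV. Pt s x) has_real_derivative 0) (at 0 within {0..})"
    proof (rule has_field_derivative_transform_within[of "\<lambda>_. 1" 0 0 "{0..}" 1])
      show "((\<lambda>_. 1) has_real_derivative 0) (at 0 within {0..})" by simp
    qed (use curveM in \<open>auto simp: probM_def\<close>)
    show ?thesis using has_field_derivative_unique[OF D1 D2 nb] by (simp add: dP_def)
  qed
  have dHeq: "dH = A g"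
  proof -
    have D: "((\<lambda>t. Hphi Phi (Pt t) q) has_real_derivative
        (\<Sum>y\<in>UNIV. q y * (phi (Pt 0 y / q y) * (dPt 0 y / q y)))) (at 0 within {0..})"
      unfolding Hphi_def
    proof (rule DERIV_sum, rule DERIV_cmult, rule DERIV_chain2[where f=Phi])
      fix y
      show "(Phi has_real_derivative phi (Pt 0 y / q y)) (at (Pt 0 y / q y))"
        using Phi_deriv qpos ppos curve0 by simp
      show "((\<lambda>s. Pt s y / q y) has_real_derivative dPt 0 y / q y) (at 0 within {0..})"
        by (rule DERIV_cdivide) (use curve_deriv in auto)
    qed
    have "dH = (\<Sum>y\<in>UNIV. q y * (phi (Pt 0 y / q y) * (dPt 0 y / q y)))"
      using has_field_derivative_unique[OF H_deriv D nb] .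
    also have "\<dots> = A g"
      unfolding A_def g_def l_def dP_def curve0 using qpos by (simp add: algebra_simps less_imp_neq[symmetric])
    finally show ?thesis .
  qed
  have bound: "\<exists>C. \<forall>h. A h \<le> C * sqrt (Bf h h)"
  proof -
    obtain x0 :: 'a where True by blast
    have "\<forall>x. \<exists>C. \<forall>h. \<bar>h x - h x0\<bar> \<le> C * sqrt (Bf h h)"
    proof
      fix x
      show "\<exists>C. \<forall>h. \<bar>h x - h x0\<bar> \<le> C * sqrt (Bf h h)"
      proof (rule poincare_path[where Pm=Pm])
        show "\<And>h. 0 \<le> Bf h h" by (rule Bnn)
        show "(x0, x) \<in> {(u, v). 0 < Pm u v}\<^sup>+" using irred by (simp add: irreducible_chain_def)
        fix u v assume uv: "0 < Pm u v" "u \<noteq> v"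
        then have inE: "(u,v) \<in> E" by (simp add: E_def kappa_def)
        have "W u v * (h v - h u)^2 \<le> Bf h h" for h
        proof -
          have "W u v * (h v - h u)^2 = (\<lambda>(x,y). W x y * (h y - h x) * (h y - h x)) (u,v)"
            by (simp add: power2_eq_square mult.assoc)
          also have "\<dots> \<le> Bf h h" unfolding Bf_def
            by (rule member_le_sum) (auto intro: tnn simp: inE)
          finally show ?thesis .
        qed
        thus "\<exists>c>0. \<forall>h. c * (h v - h u)^2 \<le> Bf h h" using Wpos[OF inE] by blast
      qed
    qed
    then obtain Cf where Cf: "\<And>x h. \<bar>h x - h x0\<bar> \<le> Cf x * sqrt (Bf h h)" by metis
    have "A h \<le> (\<Sum>x\<in>UNIV. \<bar>dP x\<bar> * Cf x) * sqrt (Bf h h)" for h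
    proof -
      have "A h = (\<Sum>x\<in>UNIV. dP x * (h x - h x0))"
        unfolding Aeq using sumdP by (simp add: algebra_simps sum_subtractf sum_distrib_right[symmetric])
      also have "\<dots> \<le> (\<Sum>x\<in>UNIV. \<bar>dP x\<bar> * Cf x * sqrt (Bf h h))"
      proof (rule sum_mono)
        fix x
        have "dP x * (h x - h x0) \<le> \<bar>dP x\<bar> * \<bar>h x - h x0\<bar>" by (simp add: abs_mult[symmetric])
        also have "\<dots> \<le> \<bar>dP x\<bar> * (Cf x * sqrt (Bf h h))" by (rule mult_left_mono[OF Cf]) simp
        finally show "dP x * (h x - h x0) \<le> \<bar>dP x\<bar> * Cf x * sqrt (Bf h h)" by (simp add: mult.assoc)
      qed
      also have "\<dots> = (\<Sum>x\<in>UNIV. \<bar>dP x\<bar> * Cf x) * sqrt (Bf h h)"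
        by (simp add: sum_distrib_right)
      finally show ?thesis .
    qed
    thus ?thesis by blast
  qed
  then obtain C where C: "\<And>h. A h \<le> C * sqrt (Bf h h)" by blast
  have A0: "A (\<lambda>x. 0) = 0" unfolding Aeq by simp
  note SF = sup_facts[of A C "\<lambda>h. Bf h h", OF C Bnn A0, folded Nsup]
  have Hg: "H1sq Pm q phi phi2 (\<lambda>x. p x / q x) (\<lambda>x. phi (p x / q x)) = Bf g g"
    unfolding H1eq g_def l_def ..
  have part1: "2 * dH + N^2 \<ge> - Bf g g"
    using SF(3)[of "\<lambda>x. - g x"] Aneg[of g] Bneg[of g] dHeq by simp
  have part2: "2 * dH + N^2 = - Bf g g \<longleftrightarrow> (\<forall>y. dPt 0 y = (\<Sum>x\<in>UNIV. kappa Pm x y * Pt 0 x))"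
  proof
    assume fw: "\<forall>y. dPt 0 y = (\<Sum>x\<in>UNIV. kappa Pm x y * Pt 0 x)"
    have AF: "\<And>h. A h = F h" unfolding Aeq Fp dP_def using fw by simp
    have Nle: "N \<le> sqrt (Bf g g)"
    proof (rule SF(4))
      show "0 \<le> sqrt (Bf g g)" using Bnn by simp
      fix h
      have "\<bar>Bf g h\<bar> = sqrt ((Bf g h)^2)" by simp
      also have "\<dots> \<le> sqrt (Bf g g * Bf h h)" by (rule real_sqrt_le_mono[OF CS])
      also have "\<dots> = sqrt (Bf g g) * sqrt (Bf h h)" by (simp add: real_sqrt_mult)
      finally have "\<bar>Bf g h\<bar> \<le> sqrt (Bf g g) * sqrt (Bf h h)" .
      thus "A h \<le> sqrt (Bf g g) * sqrt (Bf h h)" using AF[of h] Bg[of h] by linarith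
    qed
    have Nge: "sqrt (Bf g g) \<le> N"
    proof -
      have "A (\<lambda>x. - g x) / sqrt (Bf (\<lambda>x. - g x) (\<lambda>x. - g x)) \<le> N" by (rule SF(1))
      moreover have "A (\<lambda>x. - g x) = Bf g g" using Aneg[of g] AF[of g] Bg[of g] by simp
      ultimately show ?thesis using Bneg[of g] real_div_sqrt[OF Bnn[of g]] by simp
    qed
    have "N = sqrt (Bf g g)" using Nle Nge by simp
    then have "N^2 = Bf g g" using Bnn[of g] by simp
    moreover have "dH = - Bf g g" using dHeq AF[of g] Bg[of g] by simp
    ultimately show "2 * dH + N^2 = - Bf g g" by simp
  next
    assume eq: "2 * dH + N^2 = - Bf g g"
    show "\<forall>y. dPt 0 y = (\<Sum>x\<in>UNIV. kappa Pm x y * Pt 0 x)"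
    proof (rule ccontr)
      assume "\<not> ?thesis"
      then obtain y0 where y0: "dPt 0 y0 \<noteq> (\<Sum>x\<in>UNIV. kappa Pm x y0 * Pt 0 x)" by blast
      define v where "v = (\<lambda>y. dP y - (\<Sum>x\<in>UNIV. kappa Pm x y * Pt 0 x))"
      define a where "a = (\<Sum>y\<in>UNIV. v y * v y)"
      define b where "b = Bf v v"
      define t where "t = a / (b + 1)"
      have apos: "a > 0" unfolding a_def
      proof (rule sum_pos2[of UNIV y0])
        have "v y0 \<noteq> 0" using y0 by (simp add: v_def dP_def)
        thus "0 < v y0 * v y0" by (auto simp: zero_less_mult_iff linorder_neq_iff)
      qed auto
      have b0: "b \<ge> 0" unfolding b_def by (rule Bnn)
      have tpos: "t > 0" unfolding t_def using apos b0 by simp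
      have AvFv: "A v - F v = a"
        unfolding Aeq Fp a_def by (simp add: sum_subtractf[symmetric] v_def algebra_simps)
      have "2 * A (\<lambda>x. (-1) * g x + t * v x) - Bf (\<lambda>x. (-1) * g x + t * v x) (\<lambda>x. (-1) * g x + t * v x) \<le> N^2"
        by (rule SF(3))
      then have "2 * (- A g + t * A v) - (Bf g g + 2 * t * F v + t^2 * b) \<le> N^2"
        unfolding Alin quad using Bg[of v] by (simp add: b_def)
      moreover have "N^2 = - 2 * A g - Bf g g" using eq dHeq by simp
      ultimately have "2 * t * a \<le> t^2 * b" using AvFv by (simp add: algebra_simps)
      then have "2 * a \<le> t * b" using tpos by (simp add: power2_eq_square mult.assoc)
      moreover have "t * b \<le> a"
      proof -
        have "t * b = a * (b / (b + 1))" by (simp add: t_def)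
        also have "\<dots> \<le> a * 1" using apos b0 by (intro mult_left_mono) auto
        finally show ?thesis by simp
      qed
      ultimately show False using apos by simp
    qed
  qed
  show ?thesis using part1 part2 unfolding N_def Hg by simp
qed

end
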